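(* Let $\mathbf{PG}$ be a consistent PCFG with start symbol $s$, no $\varepsilon$-rule, no useless nonterminal, and in which every rule has positive selection probability. Let $\ell$ be a prefix, let $\mathrm{Expl}(G_\ell)$ be its explanation graph and $\mathrm{Eq}(G_\ell)$ its system of probability equations (defined in the context). Let $S=\{A_1,\dots,A_K\}$ be an SCC of defined goals of $\mathrm{Expl}(G_\ell)$, and write the probability equations of the goals in $S$ as $\mathbf{X}_A=M\mathbf{X}_A+\mathbf{Y}_A$ with $\mathbf{X}_A=(P(A_1),\dots,P(A_K))^T$, as described in the context. Then this system has a unique solution, namely $\mathbf{X}_A=(I-M)^{-1}\mathbf{Y}_A$ (in particular $I-M$ is invertible).
   Context: Grammar: the underlying CFG has finite terminal set $\Sigma$, finite nonterminal set $N$, start symbol $s\in N$; every rule $A\to\alpha$ has $\alpha\in(N\cup\Sigma)^+$; no nonterminal is useless (each has a rule occurring in some derivation of a terminal string from $s$). $\mathbf{PG}$ assigns to each rule $A\to\alpha$ a selection probability $\theta_{A\to\alpha}>0$ with $\sum_\alpha\theta_{A\to\alpha}=1$ for each $A$; the probability of a derivation is the product of the probabilities of the rules used; $\mathbf{PG}$ is consistent if the total probability of terminal strings derived from $s$ is $1$. A prefix is a nonempty string $\ell\in\Sigma^+$ that is an initial segment of some terminal string derivable from $s$. Explanation graph. For a prefix $\ell$ consider ground atoms $q(\ell)$, $p(\beta,u,v)$ with $\beta\in(N\cup\Sigma)^*$, $u,v\in\Sigma^*$, and switch atoms $m(A\to\alpha)$. Consider all ground clauses: (C0) $q(\ell)\leftarrow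 p(s,\ell,\varepsilon)$; (C1) $p(\varepsilon,u,u)\leftarrow$ (empty body), for all $u$; (C2) for $a\in\Sigma$: $p(a\beta,a,\varepsilon)\leftarrow$ (empty body); and $p(a\beta,av,w)\leftarrow p(\beta,v,w)$ whenever $v\neq\varepsilon$; (C3) for $A\in N$ and each rule $A\to\alpha$: $p(A\beta,u,\varepsilon)\leftarrow m(A\to\alpha)\wedge p(\alpha,u,\varepsilon)$; and $p(A\beta,u,w)\leftarrow m(A\to\alpha)\wedge p(\alpha,u,v)\wedge p(\beta,v,w)$ whenever $v\neq\varepsilon$. A $p$- or $q$-atom is provable if it lies in the least Herbrand model of these clauses with all $m$-atoms true. The defined goals of $\mathrm{Expl}(G_\ell)$ form the smallest set containing $q(\ell)$ such that whenever $H$ is a defined goal and $H\leftarrow\alpha$ is one of the clauses above whose $p$-atoms are all provable, every $p$-atom of $\alpha$ is a defined goal. The defining formula of $H$ is $H\Leftrightarrow\alpha_1\vee\dots\vee\alpha_M$, the $\alpha_i$ being the bodies of all such clauses with head $H$ whose $p$-atoms are all provable. $H$ is a parent of $C$ if $C$ occurs in some $\alpha_i$; ancestor is the transitive closure; SCCs are the classes of the equivalence "$A=B$ or each is an ancestor of the other". Probability equations $\mathrm{Eq}(G_\ell)$: one real unknown $P(H)$ per defined goal $H$, with equation $P(H)=\sum_{i=1}^M\big(\prod_{C\text{ defined goal in }\alpha_i}P(C)\big)\big(\prod_{m(A\to\alpha)\text{ in }\alpha_i}\theta_{A\to\alpha}\big)$ (empty products equal $1$). This system has a least non-negative solution $\mathbf{X}_\infty$.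 Each disjunct $\alpha_i$ of a defining formula contains at most one defined goal from any given SCC, and all other defined goals in the defining formulas of goals in $S$ lie in SCCs not equal to $S$. Writing $\mathbf{X}_A=(P(A_1),\dots,P(A_K))^T$, the equations for $A_1,\dots,A_K$ take the form $\mathbf{X}_A=M\mathbf{X}_A+\mathbf{Y}_A$, where $M_{jk}$ is the sum, over disjuncts of the defining formula of $A_j$ that contain $A_k$, of the product of the $\theta$'s and of the $P(C)$ for the other defined goals $C$ in that disjunct, and $(\mathbf{Y}_A)_j$ is the sum, over disjuncts of the defining formula of $A_j$ containing no goal of $S$, of the corresponding products; here every $P(C)$ with $C\notin S$ is treated as a constant equal to its value in $\mathbf{X}_\infty$. $I$ is the $K\times K$ identity matrix. *)

theory Defs
  imports "HOL-Analysis.Infinite_Sum" "Jordan_Normal_Form.Matrix"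
begin

datatype ('n, 't) sym = NT 'n | Tm 't

type_synonym ('n, 't) rule = "'n \<times> ('n, 't) sym list"

text \<open>Parse trees (= leftmost derivations).\<close>
datatype ('n, 't) ptree = Lf 't | Nd 'n "('n, 't) ptree list"

fun root :: "('n, 't) ptree \<Rightarrow> ('n, 't) sym" where
  "root (Lf a) = Tm a"
| "root (Nd A ts) = NT A"

fun yield :: "('n, 't) ptree \<Rightarrow> 't list" where
  "yield (Lf a) = [a]"
| "yield (Nd A ts) = concat (map yield ts)"

fun valid_tree :: "('n, 't) rule set \<Rightarrow> ('n, 't) ptree \<Rightarrow> bool" where
  "valid_tree R (Lf a) = True"
| "valid_tree R (Nd A ts) = ((A, map root ts) \<in> R \<and> (\<forall>t \<in> set ts. valid_tree R t))"

fun nts_of :: "('n, 't) ptree \<Rightarrow> 'n set" where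
  "nts_of (Lf a) = {}"
| "nts_of (Nd A ts) = insert A (\<Union>t \<in> set ts. nts_of t)"

fun tree_prob :: "(('n, 't) rule \<Rightarrow> real) \<Rightarrow> ('n, 't) ptree \<Rightarrow> real" where
  "tree_prob \<theta> (Lf a) = 1"
| "tree_prob \<theta> (Nd A ts) = \<theta> (A, map root ts) * prod_list (map (tree_prob \<theta>) ts)"

definition derivs_from :: "('n, 't) rule set \<Rightarrow> 'n \<Rightarrow> ('n, 't) ptree set" where
  "derivs_from R s = {t. valid_tree R t \<and> root t = NT s}"

definition consistent_pcfg ::
  "('n::finite, 't::finite) rule set \<Rightarrow> 'n \<Rightarrow> (('n, 't) rule \<Rightarrow> real) \<Rightarrow> bool" where
  "consistent_pcfg R s \<theta> \<longleftrightarrow>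
     finite R
   \<and> (\<forall>(A, \<alpha>) \<in> R. \<alpha> \<noteq> [])
   \<and> (\<forall>A. \<exists>t \<in> derivs_from R s. A \<in> nts_of t)
   \<and> (\<forall>r \<in> R. \<theta> r > 0)
   \<and> (\<forall>A. (\<Sum>r \<in> {r \<in> R. fst r = A}. \<theta> r) = 1)
   \<and> (tree_prob \<theta> has_sum 1) (derivs_from R s)"

definition is_prefix :: "('n, 't) rule set \<Rightarrow> 'n \<Rightarrow> 't list \<Rightarrow> bool" where
  "is_prefix R s lp \<longleftrightarrow> lp \<noteq> [] \<and> (\<exists>t \<in> derivs_from R s. (\<exists>v. yield t = lp @ v))"

datatype ('n, 't) atom =
    Qa "'t list"
  | Pa "('n, 't) sym list" "'t list" "'t list"
  | Msw "('n, 't) rule"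

fun is_p :: "('n, 't) atom \<Rightarrow> bool" where
  "is_p (Pa \<beta> u v) = True"
| "is_p _ = False"

text \<open>Ground clauses (head, body) of the prefix program G_l.\<close>
inductive_set clauses ::
  "('n, 't) rule set \<Rightarrow> 'n \<Rightarrow> 't list \<Rightarrow> (('n, 't) atom \<times> ('n, 't) atom list) set"
  for R s lp where
  C0: "(Qa lp, [Pa [NT s] lp []]) \<in> clauses R s lp"
| C1: "(Pa [] u u, []) \<in> clauses R s lp"
| C2a: "(Pa (Tm a # \<beta>) [a] [], []) \<in> clauses R s lp"
| C2b: "v \<noteq> [] \<Longrightarrow> (Pa (Tm a # \<beta>) (a # v) w, [Pa \<beta> v w]) \<in> clauses R s lp"
| C3a: "(A, \<alpha>) \<in> R \<Longrightarrow>
          (Pa (NT A # \<beta>) u [], [Msw (A, \<alpha>), Pa \<alpha> u []]) \<in> clauses R s lp"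
| C3b: "(A, \<alpha>) \<in> R \<Longrightarrow> v \<noteq> [] \<Longrightarrow>
          (Pa (NT A # \<beta>) u w, [Msw (A, \<alpha>), Pa \<alpha> u v, Pa \<beta> v w]) \<in> clauses R s lp"

text \<open>Least Herbrand model with all switch atoms true (restricted to p/q atoms).\<close>
inductive_set provable ::
  "('n, 't) rule set \<Rightarrow> 'n \<Rightarrow> 't list \<Rightarrow> ('n, 't) atom set"
  for R s lp where
  "(H, b) \<in> clauses R s lp \<Longrightarrow> (\<forall>C \<in> set b. is_p C \<longrightarrow> C \<in> provable R s lp)
     \<Longrightarrow> H \<in> provable R s lp"

text \<open>Bodies of the defining formula of H: bodies of clauses with head H
  whose p-atoms are all provable.\<close>
definition bodies ::
  "('n, 't) rule set \<Rightarrow> 'n \<Rightarrow> 't list \<Rightarrow> ('n, 't) atom \<Rightarrow> ('n, 't) atom list set" where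
  "bodies R s lp H = {b. (H, b) \<in> clauses R s lp \<and> (\<forall>C \<in> set b. is_p C \<longrightarrow> C \<in> provable R s lp)}"

inductive_set defined_goals ::
  "('n, 't) rule set \<Rightarrow> 'n \<Rightarrow> 't list \<Rightarrow> ('n, 't) atom set"
  for R s lp where
  top: "Qa lp \<in> defined_goals R s lp"
| step: "H \<in> defined_goals R s lp \<Longrightarrow> b \<in> bodies R s lp H \<Longrightarrow> C \<in> set b \<Longrightarrow> is_p C
     \<Longrightarrow> C \<in> defined_goals R s lp"

definition parent_rel :: "('n, 't) rule set \<Rightarrow> 'n \<Rightarrow> 't list \<Rightarrow> (('n, 't) atom \<times> ('n, 't) atom) set" where
  "parent_rel R s lp = {(H, C). H \<in> defined_goals R s lp \<and> is_p C \<and>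
                               (\<exists>b \<in> bodies R s lp H. C \<in> set b)}"

definition is_scc :: "('n, 't) rule set \<Rightarrow> 'n \<Rightarrow> 't list \<Rightarrow> ('n, 't) atom set \<Rightarrow> bool" where
  "is_scc R s lp S \<longleftrightarrow> (\<exists>A \<in> defined_goals R s lp.
      S = {B \<in> defined_goals R s lp. A = B \<or> ((A, B) \<in> (parent_rel R s lp)\<^sup>+ \<and> (B, A) \<in> (parent_rel R s lp)\<^sup>+)})"

fun atom_val :: "(('n, 't) rule \<Rightarrow> real) \<Rightarrow> (('n, 't) atom \<Rightarrow> real) \<Rightarrow> ('n, 't) atom \<Rightarrow> real" where
  "atom_val \<theta> X (Msw r) = \<theta> r"
| "atom_val \<theta> X C = X C"

definition eq_rhs ::
  "('n, 't) rule set \<Rightarrow> 'n \<Rightarrow> 't list \<Rightarrow> (('n, 't) rule \<Rightarrow> real) \<Rightarrow> (('n, 't) atom \<Rightarrow> real)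
     \<Rightarrow> ('n, 't) atom \<Rightarrow> real" where
  "eq_rhs R s lp \<theta> X H = (\<Sum>b \<in> bodies R s lp H. prod_list (map (atom_val \<theta> X) b))"

definition solves_eq :: "('n, 't) rule set \<Rightarrow> 'n \<Rightarrow> 't list \<Rightarrow> (('n, 't) rule \<Rightarrow> real)
     \<Rightarrow> (('n, 't) atom \<Rightarrow> real) \<Rightarrow> bool" where
  "solves_eq R s lp \<theta> X \<longleftrightarrow> (\<forall>H \<in> defined_goals R s lp. X H = eq_rhs R s lp \<theta> X H)"

definition least_nonneg_solution :: "('n, 't) rule set \<Rightarrow> 'n \<Rightarrow> 't list \<Rightarrow> (('n, 't) rule \<Rightarrow> real)
     \<Rightarrow> (('n, 't) atom \<Rightarrow> real) \<Rightarrow> bool" where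
  "least_nonneg_solution R s lp \<theta> X \<longleftrightarrow>
     (\<forall>H \<in> defined_goals R s lp. X H \<ge> 0) \<and> solves_eq R s lp \<theta> X \<and>
     (\<forall>Y. (\<forall>H \<in> defined_goals R s lp. Y H \<ge> 0) \<and> solves_eq R s lp \<theta> Y \<longrightarrow>
          (\<forall>H \<in> defined_goals R s lp. X H \<le> Y H))"

text \<open>Coefficients of the SCC system X_A = M X_A + Y_A, with goals outside S
  evaluated at Xinf.\<close>
definition scc_M :: "('n, 't) rule set \<Rightarrow> 'n \<Rightarrow> 't list \<Rightarrow> (('n, 't) rule \<Rightarrow> real)
     \<Rightarrow> (('n, 't) atom \<Rightarrow> real) \<Rightarrow> ('n, 't) atom \<Rightarrow> ('n, 't) atom \<Rightarrow> real" where
  "scc_M R s lp \<theta> Xinf Aj Ak =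
     (\<Sum>b \<in> {b \<in> bodies R s lp Aj. Ak \<in> set b}. prod_list (map (atom_val \<theta> Xinf) (remove1 Ak b)))"

definition scc_Y :: "('n, 't) rule set \<Rightarrow> 'n \<Rightarrow> 't list \<Rightarrow> (('n, 't) rule \<Rightarrow> real)
     \<Rightarrow> (('n, 't) atom \<Rightarrow> real) \<Rightarrow> ('n, 't) atom set \<Rightarrow> ('n, 't) atom \<Rightarrow> real" where
  "scc_Y R s lp \<theta> Xinf S Aj =
     (\<Sum>b \<in> {b \<in> bodies R s lp Aj. set b \<inter> S = {}}. prod_list (map (atom_val \<theta> Xinf) b))"

definition scc_mat :: "('n, 't) rule set \<Rightarrow> 'n \<Rightarrow> 't list \<Rightarrow> (('n, 't) rule \<Rightarrow> real)
     \<Rightarrow> (('n, 't) atom \<Rightarrow> real) \<Rightarrow> nat \<Rightarrow> (nat \<Rightarrow> ('n, 't) atom) \<Rightarrow> real mat" where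
  "scc_mat R s lp \<theta> Xinf K e = mat K K (\<lambda>(j, k). scc_M R s lp \<theta> Xinf (e j) (e k))"

definition scc_vec :: "('n, 't) rule set \<Rightarrow> 'n \<Rightarrow> 't list \<Rightarrow> (('n, 't) rule \<Rightarrow> real)
     \<Rightarrow> (('n, 't) atom \<Rightarrow> real) \<Rightarrow> ('n, 't) atom set \<Rightarrow> nat \<Rightarrow> (nat \<Rightarrow> ('n, 't) atom) \<Rightarrow> real vec" where
  "scc_vec R s lp \<theta> Xinf S K e = vec K (\<lambda>j. scc_Y R s lp \<theta> Xinf S (e j))"

end

theory Submission imports Defs "Jordan_Normal_Form.Determinant" "HOL-Library.Product_Lexorder" begin

definition rules_ne :: "('n, 't) rule set \<Rightarrow> bool" where
  "rules_ne R \<longleftrightarrow> (\<forall>(A, \<alpha>) \<in> R. \<alpha> \<noteq> [])"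

lemma rules_neD: "rules_ne R \<Longrightarrow> (A, \<alpha>) \<in> R \<Longrightarrow> \<alpha> \<noteq> []"
  unfolding rules_ne_def by auto

lemma prov_shape:
  assumes ne: "rules_ne R"
  shows "H \<in> provable R s lp \<Longrightarrow> (\<forall>\<gamma> u v. H = Pa \<gamma> u v \<longrightarrow> (\<exists>x. u = x @ v \<and> (\<gamma> = [] \<longleftrightarrow> x = [])))"
proof (induction H rule: provable.induct)
  case (1 H b)
  have IH: "\<exists>x. u = x @ v \<and> (\<gamma> = [] \<longleftrightarrow> x = [])" if "Pa \<gamma> u v \<in> set b" for \<gamma> u v
  proof -
    have "is_p (Pa \<gamma> u v)" by simp
    then show ?thesis using 1(2) that by blast
  qed
  from 1(1) show ?case
  proof (cases rule: clauses.cases)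
    case C0 then show ?thesis by simp
  next
    case (C1 u) then show ?thesis by simp
  next
    case (C2a a \<beta>) then show ?thesis by (intro allI impI exI[of _ "[a]"]) simp
  next
    case (C2b v a \<beta> w)
    obtain x where "v = x @ w" using IH[of \<beta> v w] C2b by auto
    then show ?thesis using C2b by (intro allI impI exI[of _ "a # x"]) auto
  next
    case (C3a A \<alpha> \<beta> u)
    obtain x where x: "u = x @ []" "\<alpha> = [] \<longleftrightarrow> x = []" using IH[of \<alpha> u "[]"] C3a by auto
    have "\<alpha> \<noteq> []" using rules_neD[OF ne C3a(3)] .
    then show ?thesis using C3a x by (intro allI impI exI[of _ "x"]) auto
  next
    case (C3b A \<alpha> v \<beta> u w)
    obtain x1 where x1: "u = x1 @ v" "\<alpha> = [] \<longleftrightarrow> x1 = []" using IH[of \<alpha> u v] C3b by auto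
    obtain x2 where x2: "v = x2 @ w" using IH[of \<beta> v w] C3b by auto
    have "\<alpha> \<noteq> []" using rules_neD[OF ne C3b(3)] .
    then show ?thesis using C3b x1 x2 by (intro allI impI exI[of _ "x1 @ x2"]) auto
  qed
qed

lemma prov_shapeD:
  assumes "rules_ne R" "Pa \<gamma> u v \<in> provable R s lp"
  obtains x where "u = x @ v" "\<gamma> = [] \<longleftrightarrow> x = []"
  using prov_shape[OF assms(1) assms(2)] by blast

lemma DG_cases:
  "H \<in> defined_goals R s lp \<Longrightarrow> H = Qa lp \<or> (is_p H \<and> H \<in> provable R s lp)"
  by (induction rule: defined_goals.induct) (auto simp: bodies_def)

lemma Msw_notin_DG: "Msw r \<notin> defined_goals R s lp"
  using DG_cases by fastforce

fun akey :: "('n, 't) atom \<Rightarrow> nat \<times> int" where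
  "akey (Qa l) = (Suc (length l), 0)"
| "akey (Pa \<gamma> u w) = (length u, - int (length w))"
| "akey (Msw r) = (0, 0)"

lemma edge_key:
  assumes ne: "rules_ne R" and e: "(H, C) \<in> parent_rel R s lp"
  shows "akey C \<le> akey H"
proof -
  from e obtain b where b: "(H, b) \<in> clauses R s lp" "\<forall>C\<in>set b. is_p C \<longrightarrow> C \<in> provable R s lp"
    "C \<in> set b" unfolding parent_rel_def bodies_def by auto
  from b(1) show ?thesis
  proof (cases rule: clauses.cases)
    case (C3b A \<alpha> v \<beta> u w)
    then have p1: "Pa \<alpha> u v \<in> provable R s lp" and p2: "Pa \<beta> v w \<in> provable R s lp" using b(2) by auto
    obtain x1 where x1: "u = x1 @ v" "\<alpha> = [] \<longleftrightarrow> x1 = []" using prov_shapeD[OF ne p1] .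
    obtain x2 where x2: "v = x2 @ w" "\<beta> = [] \<longleftrightarrow> x2 = []" using prov_shapeD[OF ne p2] .
    have "\<alpha> \<noteq> []" using rules_neD[OF ne C3b(3)] .
    then have "x1 \<noteq> []" using x1 by auto
    then show ?thesis using C3b b(3) x1 x2 by (auto simp: less_eq_prod_def)
  qed (use b(3) in \<open>auto simp: less_eq_prod_def\<close>)
qed

lemma trancl_key:
  assumes ne: "rules_ne R" and e: "(H, C) \<in> (parent_rel R s lp)\<^sup>+"
  shows "akey C \<le> akey H"
  using e by (induction rule: trancl_induct) (auto dest: edge_key[OF ne])

lemma scc_sub: "is_scc R s lp S \<Longrightarrow> S \<subseteq> defined_goals R s lp"
  unfolding is_scc_def by auto

lemma scc_key:
  assumes ne: "rules_ne R" and S: "is_scc R s lp S" and B: "B \<in> S" and B': "B' \<in> S"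
  shows "akey B = akey B'"
proof -
  from S obtain A where A: "S = {B \<in> defined_goals R s lp. A = B \<or> ((A, B) \<in> (parent_rel R s lp)\<^sup>+ \<and> (B, A) \<in> (parent_rel R s lp)\<^sup>+)}"
    unfolding is_scc_def by auto
  have "akey X = akey A" if "X \<in> S" for X
    using that A trancl_key[OF ne] by (auto intro: order.antisym)
  then show ?thesis using B B' by simp
qed

lemma body_S:
  assumes ne: "rules_ne R" and S: "is_scc R s lp S" and H: "H \<in> S" and C: "C \<in> S"
    and b: "b \<in> bodies R s lp H" and Cb: "C \<in> set b"
  shows "\<exists>A \<beta> \<alpha> u w. H = Pa (NT A # \<beta>) u w \<and> (A, \<alpha>) \<in> R \<and> C = Pa \<alpha> u w \<and>
     ((w = [] \<and> b = [Msw (A, \<alpha>), Pa \<alpha> u []]) \<or> (w \<noteq> [] \<and> \<beta> = [] \<and> b = [Msw (A, \<alpha>), Pa \<alpha> u w, Pa [] w w]))"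
proof -
  have k: "akey C = akey H" using scc_key[OF ne S C H] .
  have CM: "C \<noteq> Msw r" for r using C scc_sub[OF S] Msw_notin_DG[of r R s lp] by blast
  from b have b1: "(H, b) \<in> clauses R s lp" and b2: "\<forall>C\<in>set b. is_p C \<longrightarrow> C \<in> provable R s lp"
    unfolding bodies_def by auto
  from b1 show ?thesis
  proof (cases rule: clauses.cases)
    case (C3a A \<alpha> \<beta> u)
    then show ?thesis using Cb CM by auto
  next
    case (C3b A \<alpha> v \<beta> u w)
    then have p1: "Pa \<alpha> u v \<in> provable R s lp" and p2: "Pa \<beta> v w \<in> provable R s lp" using b2 by auto
    obtain x1 where x1: "u = x1 @ v" "\<alpha> = [] \<longleftrightarrow> x1 = []" using prov_shapeD[OF ne p1] .
    obtain x2 where x2: "v = x2 @ w" "\<beta> = [] \<longleftrightarrow> x2 = []" using prov_shapeD[OF ne p2] .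
    have "\<alpha> \<noteq> []" using rules_neD[OF ne C3b(3)] .
    then have "x1 \<noteq> []" using x1 by auto
    have "C \<noteq> Pa \<beta> v w" using k C3b x1 \<open>x1 \<noteq> []\<close> by auto
    then have Ceq: "C = Pa \<alpha> u v" using Cb C3b CM by auto
    then have "length v = length w" using k C3b by auto
    then have "x2 = []" using x2 by auto
    then show ?thesis using C3b Ceq x2 by auto
  qed (use Cb k in auto)
qed

lemma finite_bodies:
  fixes R :: "('n, 't::finite) rule set"
  assumes ne: "rules_ne R" and fin: "finite R"
  shows "finite (bodies R s lp H)"
proof (cases H)
  case (Qa l)
  have "bodies R s lp H \<subseteq> {[Pa [NT s] lp []]}"
  proof
    fix b assume "b \<in> bodies R s lp H"
    then have "(Qa l, b) \<in> clauses R s lp" unfolding bodies_def Qa by auto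
    then show "b \<in> {[Pa [NT s] lp []]}" by (cases rule: clauses.cases) auto
  qed
  then show ?thesis by (rule finite_subset) simp
next
  case (Msw r)
  have "bodies R s lp H \<subseteq> {}"
  proof
    fix b assume "b \<in> bodies R s lp H"
    then have "(Msw r, b) \<in> clauses R s lp" unfolding bodies_def Msw by auto
    then show "b \<in> {}" by (cases rule: clauses.cases)
  qed
  then show ?thesis by simp
next
  case (Pa \<gamma> u w)
  let ?V = "{v :: 't list. set v \<subseteq> UNIV \<and> length v \<le> length u}"
  let ?X = "{[], [Pa (tl \<gamma>) (tl u) w]} \<union> (\<lambda>r. [Msw r, Pa (snd r) u []]) ` R
     \<union> (\<lambda>(r, v). [Msw r, Pa (snd r) u v, Pa (tl \<gamma>) v w]) ` (R \<times> ?V)"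
  have fV: "finite ?V" by (rule finite_lists_length_le) simp
  have "bodies R s lp H \<subseteq> ?X"
  proof
    fix b assume "b \<in> bodies R s lp H"
    then have b1: "(Pa \<gamma> u w, b) \<in> clauses R s lp" and b2: "\<forall>C\<in>set b. is_p C \<longrightarrow> C \<in> provable R s lp"
      unfolding bodies_def Pa by auto
    from b1 show "b \<in> ?X"
    proof (cases rule: clauses.cases)
      case (C3a A \<alpha> \<beta>)
      then have "b = (\<lambda>r. [Msw r, Pa (snd r) u []]) (A, \<alpha>)" by simp
      then have "b \<in> (\<lambda>r. [Msw r, Pa (snd r) u []]) ` R" using `(A, \<alpha>) \<in> R` by (rule image_eqI)
      then show ?thesis by blast
    next
      case (C3b A \<alpha> v \<beta>)
      then have p1: "Pa \<alpha> u v \<in> provable R s lp" using b2 by auto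
      obtain x1 where "u = x1 @ v" using prov_shapeD[OF ne p1] .
      then have "length v \<le> length u" by simp
      then have mem: "((A, \<alpha>), v) \<in> R \<times> ?V" using `(A, \<alpha>) \<in> R` by simp
      have "b = (\<lambda>(r, v). [Msw r, Pa (snd r) u v, Pa (tl \<gamma>) v w]) ((A, \<alpha>), v)" using C3b by simp
      then have "b \<in> (\<lambda>(r, v). [Msw r, Pa (snd r) u v, Pa (tl \<gamma>) v w]) ` (R \<times> ?V)" using mem by (rule image_eqI)
      then show ?thesis by blast
    qed simp_all
  qed
  moreover have "finite ?X" using fin fV by blast
  ultimately show ?thesis by (rule finite_subset)
qed

lemma bodies_empty_goal:
  "bodies R s lp (Pa [] w w) = {[]}"
  unfolding bodies_def by (auto elim: clauses.cases intro: clauses.C1)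

lemma prod_list_map_remove1:
  fixes f :: "'a \<Rightarrow> 'b::comm_monoid_mult"
  shows "x \<in> set xs \<Longrightarrow> prod_list (map f xs) = f x * prod_list (map f (remove1 x xs))"
  by (induction xs) (auto simp: ac_simps)

lemma subtree_valid:
  "valid_tree R t \<Longrightarrow> A \<in> nts_of t \<Longrightarrow> \<exists>ts. valid_tree R (Nd A ts)"
proof (induction t)
  case (Lf a) then show ?case by simp
next
  case (Nd B ts)
  show ?case
  proof (cases "A = B")
    case True then show ?thesis using Nd.prems by auto
  next
    case False
    then obtain t where "t \<in> set ts" "A \<in> nts_of t" using Nd.prems by auto
    then show ?thesis using Nd.IH Nd.prems by auto
  qed
qed

definition lc :: "('n, 't) rule set \<Rightarrow> ('n, 't) atom \<Rightarrow> ('n, 't) atom \<Rightarrow> bool" where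
  "lc R H C \<longleftrightarrow> (\<exists>A \<beta> \<alpha> u w. H = Pa (NT A # \<beta>) u w \<and> (w = [] \<or> \<beta> = []) \<and> (A, \<alpha>) \<in> R \<and> C = Pa \<alpha> u w)"

fun pstr :: "('n, 't) atom \<Rightarrow> ('n, 't) sym list" where
  "pstr (Pa \<gamma> u w) = \<gamma>"
| "pstr _ = []"

locale scc_ctx =
  fixes R :: "('n::finite, 't::finite) rule set" and s :: 'n and \<theta> :: "('n, 't) rule \<Rightarrow> real"
    and lp :: "'t list" and Xinf :: "('n, 't) atom \<Rightarrow> real"
    and S :: "('n, 't) atom set" and K :: nat and e :: "nat \<Rightarrow> ('n, 't) atom"
  assumes cons: "consistent_pcfg R s \<theta>"
    and lsol: "least_nonneg_solution R s lp \<theta> Xinf"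
    and scc: "is_scc R s lp S"
    and bij: "bij_betw e {..<K} S"
begin

lemma ne: "rules_ne R" using cons unfolding consistent_pcfg_def rules_ne_def by (elim conjE) assumption
lemma finR: "finite R" using cons unfolding consistent_pcfg_def by (elim conjE) assumption
lemma thpos_all: "\<forall>r \<in> R. \<theta> r > 0" using cons unfolding consistent_pcfg_def by (elim conjE) assumption
lemma thpos: "r \<in> R \<Longrightarrow> \<theta> r > 0" using thpos_all by blast
lemma thsum_all: "\<forall>A. (\<Sum>r \<in> {r \<in> R. fst r = A}. \<theta> r) = 1" using cons unfolding consistent_pcfg_def by (elim conjE) assumption
lemma thsum: "(\<Sum>r \<in> {r \<in> R. fst r = A}. \<theta> r) = 1" using thsum_all by blast
lemma useful_all: "\<forall>A. \<exists>t \<in> derivs_from R s. A \<in> nts_of t" using cons unfolding consistent_pcfg_def by (elim conjE) assumption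
lemma useful: "\<exists>t \<in> derivs_from R s. A \<in> nts_of t" using useful_all by blast
lemma solves_all: "solves_eq R s lp \<theta> Xinf"
  using lsol unfolding least_nonneg_solution_def by (elim conjE) assumption
lemma solves: "H \<in> defined_goals R s lp \<Longrightarrow> Xinf H = eq_rhs R s lp \<theta> Xinf H"
  using solves_all unfolding solves_eq_def by blast
lemma SDG: "S \<subseteq> defined_goals R s lp" using scc_sub[OF scc] .

lemma S_prov: assumes "C \<in> S" "is_p C" shows "C \<in> provable R s lp"
proof -
  have "C \<in> defined_goals R s lp" using assms SDG by blast
  from DG_cases[OF this] show ?thesis using assms(2) by auto
qed

lemma S_notMsw: "C \<in> S \<Longrightarrow> C \<noteq> Msw r"
  using SDG Msw_notin_DG[of r R s lp] by blast

lemma one_goal: "Pa [] w w \<in> defined_goals R s lp \<Longrightarrow> Xinf (Pa [] w w) = 1"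
  using solves[of "Pa [] w w"] unfolding eq_rhs_def bodies_empty_goal by simp

lemma prov_empty: "Pa [] w w \<in> provable R s lp"
  by (rule provable.intros[OF clauses.C1]) simp

lemma M_pos:
  assumes H: "H \<in> S" and Heq: "H = Pa (NT A # \<beta>) u w" and wb: "w = [] \<or> \<beta> = []"
    and r: "(A, \<alpha>) \<in> R" and C: "Pa \<alpha> u w \<in> S"
  shows "scc_M R s lp \<theta> Xinf H (Pa \<alpha> u w) = \<theta> (A, \<alpha>)"
proof -
  define b0 where "b0 = (if w = [] then [Msw (A, \<alpha>), Pa \<alpha> u []] else [Msw (A, \<alpha>), Pa \<alpha> u w, Pa [] w w])"
  have pC: "Pa \<alpha> u w \<in> provable R s lp" using S_prov[OF C] by simp
  have b0in: "b0 \<in> bodies R s lp H"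
  proof (cases "w = []")
    case True
    have "(H, b0) \<in> clauses R s lp" unfolding b0_def Heq using True r by (simp add: clauses.C3a)
    then show ?thesis unfolding bodies_def b0_def using True pC by auto
  next
    case False
    then have "\<beta> = []" using wb by simp
    have "(H, b0) \<in> clauses R s lp" unfolding b0_def Heq using False r \<open>\<beta> = []\<close>
      by (simp add: clauses.C3b)
    then show ?thesis unfolding bodies_def b0_def using False pC prov_empty by auto
  qed
  have set_eq: "{b \<in> bodies R s lp H. Pa \<alpha> u w \<in> set b} = {b0}"
  proof (intro equalityI subsetI)
    fix b assume "b \<in> {b \<in> bodies R s lp H. Pa \<alpha> u w \<in> set b}"
    then have b: "b \<in> bodies R s lp H" "Pa \<alpha> u w \<in> set b" by auto
    from body_S[OF ne scc H C b] show "b \<in> {b0}" unfolding b0_def Heq by auto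
  next
    fix b assume "b \<in> {b0}"
    then show "b \<in> {b \<in> bodies R s lp H. Pa \<alpha> u w \<in> set b}" using b0in unfolding b0_def by auto
  qed
  show ?thesis
  proof (cases "w = []")
    case True
    then show ?thesis unfolding scc_M_def set_eq b0_def by simp
  next
    case False
    have "Pa [] w w \<in> defined_goals R s lp"
      using defined_goals.step[of H R s lp b0 "Pa [] w w"] b0in H SDG False unfolding b0_def by auto
    then have "Xinf (Pa [] w w) = 1" by (rule one_goal)
    then show ?thesis using False unfolding scc_M_def set_eq b0_def by simp
  qed
qed

lemma M_zero:
  assumes H: "H \<in> S" and C: "C \<in> S" and nlc: "\<not> lc R H C"
  shows "scc_M R s lp \<theta> Xinf H C = 0"
proof -
  have e0: "{b \<in> bodies R s lp H. C \<in> set b} = {}"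
  proof (rule ccontr)
    assume "{b \<in> bodies R s lp H. C \<in> set b} \<noteq> {}"
    then obtain b where "b \<in> bodies R s lp H" "C \<in> set b" by auto
    from body_S[OF ne scc H C this] have "lc R H C" unfolding lc_def by blast
    with nlc show False by simp
  qed
  show ?thesis by (simp only: scc_M_def e0 sum.empty)
qed

lemma M_nonneg:
  assumes H: "H \<in> S" and C: "C \<in> S"
  shows "scc_M R s lp \<theta> Xinf H C \<ge> 0"
proof (cases "lc R H C")
  case True
  then obtain A \<beta> \<alpha> u w where "H = Pa (NT A # \<beta>) u w" "w = [] \<or> \<beta> = []" "(A, \<alpha>) \<in> R" "C = Pa \<alpha> u w"
    unfolding lc_def by blast
  note hh = this
  have "scc_M R s lp \<theta> Xinf H C = \<theta> (A, \<alpha>)" using M_pos[OF H hh(1,2,3)] C hh(4) by simp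
  then show ?thesis using thpos[OF hh(3)] by simp
next
  case False then show ?thesis using M_zero[OF H C] by simp
qed

lemma inj_e: "inj_on e {..<K}" using bij by (rule bij_betw_imp_inj_on)
lemma S_img: "S = e ` {..<K}" using bij by (simp add: bij_betw_def)
lemma e_in: "k < K \<Longrightarrow> e k \<in> S" using S_img by blast

lemma decomp:
  assumes H: "H \<in> S"
  shows "Xinf H = (\<Sum>k<K. scc_M R s lp \<theta> Xinf H (e k) * Xinf (e k)) + scc_Y R s lp \<theta> Xinf S H"
proof -
  let ?F = "\<lambda>b. prod_list (map (atom_val \<theta> Xinf) b)"
  let ?B = "bodies R s lp H"
  let ?Bn = "{b \<in> ?B. set b \<inter> S = {}}"
  let ?Bs = "{b \<in> ?B. set b \<inter> S \<noteq> {}}"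
  let ?Bk = "\<lambda>k. {b \<in> ?B. e k \<in> set b}"
  have fin: "finite ?B" by (rule finite_bodies[OF ne finR])
  have HD: "H \<in> defined_goals R s lp" using H SDG by blast
  have "Xinf H = sum ?F ?B" using solves[OF HD] unfolding eq_rhs_def .
  also have "?B = ?Bn \<union> ?Bs" by blast
  also have "sum ?F (?Bn \<union> ?Bs) = sum ?F ?Bn + sum ?F ?Bs"
    by (rule sum.union_disjoint) (use fin in auto)
  also have "sum ?F ?Bn = scc_Y R s lp \<theta> Xinf S H" unfolding scc_Y_def ..
  also have "?Bs = (\<Union>k\<in>{..<K}. ?Bk k)" using S_img by blast
  also have "sum ?F (\<Union>k\<in>{..<K}. ?Bk k) = (\<Sum>k<K. sum ?F (?Bk k))"
  proof (rule sum.UNION_disjoint)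
    show "finite {..<K}" by simp
    show "\<forall>i\<in>{..<K}. finite (?Bk i)" using fin by auto
    show "\<forall>i\<in>{..<K}. \<forall>j\<in>{..<K}. i \<noteq> j \<longrightarrow> ?Bk i \<inter> ?Bk j = {}"
    proof (intro ballI impI)
      fix i j assume ij: "i \<in> {..<K}" "j \<in> {..<K}" "i \<noteq> j"
      show "?Bk i \<inter> ?Bk j = {}"
      proof (rule ccontr)
        assume "?Bk i \<inter> ?Bk j \<noteq> {}"
        then obtain b where b: "b \<in> ?B" "e i \<in> set b" "e j \<in> set b" by auto
        have ei: "e i \<in> S" "e j \<in> S" using ij e_in by auto
        from body_S[OF ne scc H ei(1) b(1) b(2)] body_S[OF ne scc H ei(2) b(1) b(3)]
        have "e i = e j" by auto
        with inj_e ij show False by (auto dest: inj_onD)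
      qed
    qed
  qed
  also have "(\<Sum>k<K. sum ?F (?Bk k)) = (\<Sum>k<K. scc_M R s lp \<theta> Xinf H (e k) * Xinf (e k))"
  proof (rule sum.cong[OF refl])
    fix k assume k: "k \<in> {..<K}"
    have av: "atom_val \<theta> Xinf (e k) = Xinf (e k)"
    proof (cases "e k")
      case (Msw r) then show ?thesis using S_notMsw[OF e_in, of k r] k by simp
    qed simp_all
    have "sum ?F (?Bk k) = (\<Sum>b\<in>?Bk k. Xinf (e k) * prod_list (map (atom_val \<theta> Xinf) (remove1 (e k) b)))"
      by (rule sum.cong[OF refl]) (simp add: prod_list_map_remove1[of "e k"] av)
    also have "... = Xinf (e k) * scc_M R s lp \<theta> Xinf H (e k)"
      unfolding scc_M_def by (simp add: sum_distrib_left)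
    finally show "sum ?F (?Bk k) = scc_M R s lp \<theta> Xinf H (e k) * Xinf (e k)" by simp
  qed
  finally show ?thesis by simp
qed

definition rs :: "nat \<Rightarrow> real" where
  "rs j = (\<Sum>k<K. scc_M R s lp \<theta> Xinf (e j) (e k))"

lemma rs_nonform:
  assumes j: "j < K" and nf: "\<not> (\<exists>A \<beta> u w. e j = Pa (NT A # \<beta>) u w \<and> (w = [] \<or> \<beta> = []))"
  shows "rs j = 0"
  unfolding rs_def
proof (rule sum.neutral, rule ballI)
  fix k assume "k \<in> {..<K}"
  then have "\<not> lc R (e j) (e k)" using nf unfolding lc_def by blast
  then show "scc_M R s lp \<theta> Xinf (e j) (e k) = 0" using M_zero e_in j \<open>k \<in> {..<K}\<close> by auto
qed

lemma rs_form:
  assumes j: "j < K" and ej: "e j = Pa (NT A # \<beta>) u w" and wb: "w = [] \<or> \<beta> = []"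
  shows "rs j \<le> 1" and "rs j \<ge> 1 \<Longrightarrow> (A, \<alpha>) \<in> R \<Longrightarrow> \<exists>k<K. e k = Pa \<alpha> u w"
proof -
  let ?M = "\<lambda>k. scc_M R s lp \<theta> Xinf (e j) (e k)"
  define Kp where "Kp = {k. k < K \<and> (\<exists>\<alpha>. (A, \<alpha>) \<in> R \<and> e k = Pa \<alpha> u w)}"
  define g where "g k = (A, pstr (e k))" for k
  let ?RA = "{r \<in> R. fst r = A}"
  have Kp_sub: "Kp \<subseteq> {..<K}" unfolding Kp_def by auto
  have ejS: "e j \<in> S" using e_in j .
  have rs1: "rs j = sum ?M Kp"
    unfolding rs_def
  proof (rule sum.mono_neutral_right)
    show "finite {..<K}" by simp
    show "Kp \<subseteq> {..<K}" by (rule Kp_sub)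
    show "\<forall>i\<in>{..<K} - Kp. ?M i = 0"
    proof
      fix i assume i: "i \<in> {..<K} - Kp"
      have "\<not> lc R (e j) (e i)" using i ej unfolding lc_def Kp_def by auto
      then show "?M i = 0" using M_zero[OF ejS] e_in i by auto
    qed
  qed
  have Mk: "?M k = \<theta> (g k)" if k: "k \<in> Kp" for k
  proof -
    from k obtain \<alpha>' where a: "k < K" "(A, \<alpha>') \<in> R" "e k = Pa \<alpha>' u w" unfolding Kp_def by auto
    have "?M k = \<theta> (A, \<alpha>')" using M_pos[OF ejS ej wb a(2)] e_in[OF a(1)] a(3) by simp
    then show ?thesis unfolding g_def using a(3) by simp
  qed
  have ginj: "inj_on g Kp"
  proof (rule inj_onI)
    fix k k' assume kk: "k \<in> Kp" "k' \<in> Kp" "g k = g k'"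
    then have "e k = e k'" unfolding Kp_def g_def by auto
    with inj_e kk Kp_sub show "k = k'" by (auto dest: inj_onD)
  qed
  have gimg: "g ` Kp \<subseteq> ?RA" unfolding Kp_def g_def by auto
  have rs2: "rs j = sum \<theta> (g ` Kp)"
    unfolding rs1 sum.reindex[OF ginj] using Mk by simp
  have finRA: "finite ?RA" using finR by simp
  have th0: "\<forall>r\<in>?RA. 0 \<le> \<theta> r" using thpos by (auto intro: less_imp_le)
  show "rs j \<le> 1"
  proof -
    have "sum \<theta> (g ` Kp) \<le> sum \<theta> ?RA"
      by (rule sum_mono2[OF finRA gimg]) (use th0 in blast)
    then show ?thesis unfolding rs2 thsum .
  qed
  assume ge: "rs j \<ge> 1" and r: "(A, \<alpha>) \<in> R"
  show "\<exists>k<K. e k = Pa \<alpha> u w"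
  proof (rule ccontr)
    assume no: "\<not> (\<exists>k<K. e k = Pa \<alpha> u w)"
    have notin: "(A, \<alpha>) \<notin> g ` Kp"
    proof
      assume "(A, \<alpha>) \<in> g ` Kp"
      then obtain k where k: "k \<in> Kp" "g k = (A, \<alpha>)" by auto
      then obtain \<alpha>' where a: "k < K" "e k = Pa \<alpha>' u w" unfolding Kp_def by auto
      then have "\<alpha>' = \<alpha>" using k(2) unfolding g_def by simp
      with a no show False by auto
    qed
    have sub: "g ` Kp \<subseteq> ?RA - {(A, \<alpha>)}" using gimg notin by auto
    have "sum \<theta> (g ` Kp) \<le> sum \<theta> (?RA - {(A, \<alpha>)})"
      by (rule sum_mono2) (use finRA sub th0 in auto)
    also have "... = sum \<theta> ?RA - \<theta> (A, \<alpha>)"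
      using finRA r by (subst sum_diff1) auto
    also have "... < 1" using thsum thpos[OF r] by simp
    finally show False using ge rs2 by simp
  qed
qed

lemma mat_idx: "j < K \<Longrightarrow> k < K \<Longrightarrow> scc_mat R s lp \<theta> Xinf K e $$ (j, k) = scc_M R s lp \<theta> Xinf (e j) (e k)"
  unfolding scc_mat_def by simp

lemma mat_carrier: "scc_mat R s lp \<theta> Xinf K e \<in> carrier_mat K K"
  unfolding scc_mat_def by simp

lemma vec_carrier: "scc_vec R s lp \<theta> Xinf S K e \<in> carrier_vec K"
  unfolding scc_vec_def by simp

lemma mult_idx:
  assumes x: "x \<in> carrier_vec K" and j: "j < K"
  shows "(scc_mat R s lp \<theta> Xinf K e *\<^sub>v x) $ j = (\<Sum>k<K. scc_M R s lp \<theta> Xinf (e j) (e k) * x $ k)"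
proof -
  have "(scc_mat R s lp \<theta> Xinf K e *\<^sub>v x) $ j = row (scc_mat R s lp \<theta> Xinf K e) j \<bullet> x"
    using j mat_carrier by (simp add: index_mult_mat_vec)
  also have "... = (\<Sum>k\<in>{0..<K}. row (scc_mat R s lp \<theta> Xinf K e) j $ k * x $ k)"
    unfolding scalar_prod_def using x by simp
  also have "... = (\<Sum>k<K. scc_M R s lp \<theta> Xinf (e j) (e k) * x $ k)"
    unfolding atLeast0LessThan
    by (rule sum.cong[OF refl]) (use j mat_carrier mat_idx in \<open>auto simp: index_row\<close>)
  finally show ?thesis .
qed

lemma kernel_trivial:
  assumes x: "x \<in> carrier_vec K" and fx: "x = scc_mat R s lp \<theta> Xinf K e *\<^sub>v x"
  shows "x = 0\<^sub>v K"
proof (rule ccontr)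
  assume nz: "x \<noteq> 0\<^sub>v K"
  let ?M = "\<lambda>j k. scc_M R s lp \<theta> Xinf (e j) (e k)"
  have xj: "x $ j = (\<Sum>k<K. ?M j k * x $ k)" if "j < K" for j
    using mult_idx[OF x that] fx by simp
  have Mnn: "?M j k \<ge> 0" if "j < K" "k < K" for j k
    using M_nonneg e_in that by auto
  obtain j1 where j1: "j1 < K" "x $ j1 \<noteq> 0"
  proof (rule ccontr)
    assume "\<not> thesis"
    then have "\<forall>j<K. x $ j = 0" using that by blast
    then have "x = 0\<^sub>v K" using x by (intro eq_vecI) auto
    with nz show False by simp
  qed
  define m where "m = Max ((\<lambda>j. \<bar>x $ j\<bar>) ` {..<K})"
  have fin: "finite ((\<lambda>j. \<bar>x $ j\<bar>) ` {..<K})" by simp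
  have mge: "\<bar>x $ j\<bar> \<le> m" if "j < K" for j
    unfolding m_def by (rule Max_ge[OF fin]) (use that in auto)
  have mpos: "m > 0" using mge[OF j1(1)] j1(2) by simp
  have "m \<in> (\<lambda>j. \<bar>x $ j\<bar>) ` {..<K}" unfolding m_def by (rule Max_in[OF fin]) (use j1 in auto)
  then obtain j0 where j0: "j0 < K" "\<bar>x $ j0\<bar> = m" by auto
  define T where "T = {j. j < K \<and> \<bar>x $ j\<bar> = m}"
  have P: "\<exists>A \<beta> u w. e j = Pa (NT A # \<beta>) u w \<and> (w = [] \<or> \<beta> = []) \<and>
             (\<forall>\<alpha>. (A, \<alpha>) \<in> R \<longrightarrow> (\<exists>k\<in>T. e k = Pa \<alpha> u w))" if jT: "j \<in> T" for j
  proof -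
    have j: "j < K" and xm: "\<bar>x $ j\<bar> = m" using jT unfolding T_def by auto
    have s1: "m \<le> (\<Sum>k<K. ?M j k * \<bar>x $ k\<bar>)"
    proof -
      have "m = \<bar>\<Sum>k<K. ?M j k * x $ k\<bar>" using xm xj[OF j] by simp
      also have "... \<le> (\<Sum>k<K. \<bar>?M j k * x $ k\<bar>)" by (rule sum_abs)
      also have "... = (\<Sum>k<K. ?M j k * \<bar>x $ k\<bar>)"
        by (rule sum.cong[OF refl]) (use Mnn[OF j] in \<open>auto simp: abs_mult\<close>)
      finally show ?thesis .
    qed
    have s2: "(\<Sum>k<K. ?M j k * \<bar>x $ k\<bar>) \<le> m * rs j"
    proof -
      have "(\<Sum>k<K. ?M j k * \<bar>x $ k\<bar>) \<le> (\<Sum>k<K. ?M j k * m)"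
        by (rule sum_mono) (use Mnn[OF j] mge in \<open>auto intro: mult_left_mono\<close>)
      also have "... = m * rs j" unfolding rs_def sum_distrib_left by (rule sum.cong[OF refl]) simp
      finally show ?thesis .
    qed
    have rge: "rs j \<ge> 1"
    proof (rule ccontr)
      assume "\<not> rs j \<ge> 1"
      then have "m * rs j < m * 1" using mpos by (intro mult_strict_left_mono) auto
      then show False using s1 s2 by simp
    qed
    have form: "\<exists>A \<beta> u w. e j = Pa (NT A # \<beta>) u w \<and> (w = [] \<or> \<beta> = [])"
    proof (rule ccontr)
      assume "\<not> ?thesis"
      then have "rs j = 0" by (rule rs_nonform[OF j])
      with rge show False by simp
    qed
    then obtain A \<beta> u w where ej: "e j = Pa (NT A # \<beta>) u w" and wb: "w = [] \<or> \<beta> = []" by blast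
    have rle: "rs j \<le> 1" by (rule rs_form(1)[OF j ej wb])
    have zero: "(\<Sum>k<K. ?M j k * (m - \<bar>x $ k\<bar>)) = 0"
    proof -
      have "(\<Sum>k<K. ?M j k * (m - \<bar>x $ k\<bar>)) = m * rs j - (\<Sum>k<K. ?M j k * \<bar>x $ k\<bar>)"
        unfolding rs_def sum_distrib_left sum_subtractf[symmetric] by (rule sum.cong[OF refl]) (simp add: right_diff_distrib)
      also have "... \<le> 0" using s1 rle mpos by (smt (verit) mult_left_le)
      finally have "(\<Sum>k<K. ?M j k * (m - \<bar>x $ k\<bar>)) \<le> 0" .
      moreover have "(\<Sum>k<K. ?M j k * (m - \<bar>x $ k\<bar>)) \<ge> 0"
        by (rule sum_nonneg) (use Mnn[OF j] mge in auto)
      ultimately show ?thesis by simp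
    qed
    have each: "?M j k * (m - \<bar>x $ k\<bar>) = 0" if "k < K" for k
    proof -
      have "\<forall>k\<in>{..<K}. ?M j k * (m - \<bar>x $ k\<bar>) = 0"
        using iffD1[OF sum_nonneg_eq_0_iff[of "{..<K}" "\<lambda>k. ?M j k * (m - \<bar>x $ k\<bar>)"]] zero Mnn[OF j] mge
        by auto
      then show ?thesis using that by simp
    qed
    have "\<forall>\<alpha>. (A, \<alpha>) \<in> R \<longrightarrow> (\<exists>k\<in>T. e k = Pa \<alpha> u w)"
    proof (intro allI impI)
      fix \<alpha> assume r: "(A, \<alpha>) \<in> R"
      obtain k where k: "k < K" "e k = Pa \<alpha> u w" using rs_form(2)[OF j ej wb rge r] by blast
      have "?M j k = \<theta> (A, \<alpha>)" using M_pos[OF e_in[OF j] ej wb r] e_in[OF k(1)] k(2) by simp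
      then have "?M j k > 0" using thpos[OF r] by simp
      then have "\<bar>x $ k\<bar> = m" using each[OF k(1)] by simp
      then show "\<exists>k\<in>T. e k = Pa \<alpha> u w" using k unfolding T_def by auto
    qed
    then show ?thesis using ej wb by blast
  qed
  have notree: "valid_tree R t \<Longrightarrow> root t = NT A \<Longrightarrow> (\<exists>j\<in>T. \<exists>\<beta> u w. e j = Pa (NT A # \<beta>) u w) \<Longrightarrow> False"
    for t A
  proof (induction t arbitrary: A)
    case (Lf a) then show ?case by simp
  next
    case (Nd B ts)
    then have AB: "A = B" by simp
    from Nd.prems(3) obtain j \<beta> u w where j: "j \<in> T" "e j = Pa (NT A # \<beta>) u w" by blast
    from P[OF j(1)] obtain A' \<beta>' u' w' where
      P1: "e j = Pa (NT A' # \<beta>') u' w'" "\<forall>\<alpha>. (A', \<alpha>) \<in> R \<longrightarrow> (\<exists>k\<in>T. e k = Pa \<alpha> u' w')" by blast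
    have eqs: "A' = A" "u' = u" "w' = w" using P1(1) j(2) by auto
    have "(A, map root ts) \<in> R" using Nd.prems(1) AB by simp
    then obtain k where k: "k \<in> T" "e k = Pa (map root ts) u w" using P1(2) eqs by blast
    from P[OF k(1)] obtain B' \<beta>'' u'' w'' where "e k = Pa (NT B' # \<beta>'') u'' w''" by blast
    then have mr: "map root ts = NT B' # \<beta>''" using k(2) by simp
    then obtain t1 ts' where ts: "ts = t1 # ts'" by (cases ts) auto
    have r1: "root t1 = NT B'" using mr ts by simp
    have v1: "valid_tree R t1" using Nd.prems(1) ts by simp
    have "\<exists>j\<in>T. \<exists>\<beta> u w. e j = Pa (NT B' # \<beta>) u w" using k \<open>e k = Pa (NT B' # \<beta>'') u'' w''\<close> by blast
    then show False using Nd.IH[of t1 B'] ts v1 r1 by simp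
  qed
  have j0T: "j0 \<in> T" unfolding T_def using j0 by simp
  from P[OF j0T] obtain A0 \<beta>0 u0 w0 where ej0: "e j0 = Pa (NT A0 # \<beta>0) u0 w0" by blast
  from useful[of A0] obtain t where t: "t \<in> derivs_from R s" "A0 \<in> nts_of t" by blast
  have "valid_tree R t" using t(1) unfolding derivs_from_def by simp
  from subtree_valid[OF this t(2)] obtain ts where "valid_tree R (Nd A0 ts)" by blast
  then show False using notree[of "Nd A0 ts" A0] j0T ej0 by auto
qed

lemma Xinf_fix:
  "vec K (\<lambda>j. Xinf (e j)) = scc_mat R s lp \<theta> Xinf K e *\<^sub>v vec K (\<lambda>j. Xinf (e j)) + scc_vec R s lp \<theta> Xinf S K e"
proof (rule eq_vecI)
  fix j assume "j < dim_vec (scc_mat R s lp \<theta> Xinf K e *\<^sub>v vec K (\<lambda>j. Xinf (e j)) + scc_vec R s lp \<theta> Xinf S K e)"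
  then have j: "j < K" using vec_carrier by simp
  have "(scc_mat R s lp \<theta> Xinf K e *\<^sub>v vec K (\<lambda>j. Xinf (e j)) + scc_vec R s lp \<theta> Xinf S K e) $ j
     = (scc_mat R s lp \<theta> Xinf K e *\<^sub>v vec K (\<lambda>j. Xinf (e j))) $ j + scc_vec R s lp \<theta> Xinf S K e $ j"
    using j vec_carrier by simp
  also have "... = (\<Sum>k<K. scc_M R s lp \<theta> Xinf (e j) (e k) * Xinf (e k)) + scc_Y R s lp \<theta> Xinf S (e j)"
    using mult_idx[of "vec K (\<lambda>j. Xinf (e j))" j] j unfolding scc_vec_def by simp
  also have "... = Xinf (e j)" using decomp[OF e_in[OF j]] by simp
  finally show "vec K (\<lambda>j. Xinf (e j)) $ j = (scc_mat R s lp \<theta> Xinf K e *\<^sub>v vec K (\<lambda>j. Xinf (e j)) + scc_vec R s lp \<theta> Xinf S K e) $ j"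
    using j by simp
next
  show "dim_vec (vec K (\<lambda>j. Xinf (e j))) = dim_vec (scc_mat R s lp \<theta> Xinf K e *\<^sub>v vec K (\<lambda>j. Xinf (e j)) + scc_vec R s lp \<theta> Xinf S K e)"
    using vec_carrier by simp
qed

end

lemma inj_imp_invertible:
  fixes A :: "real mat"
  assumes A: "A \<in> carrier_mat n n"
    and inj: "\<And>x. x \<in> carrier_vec n \<Longrightarrow> A *\<^sub>v x = 0\<^sub>v n \<Longrightarrow> x = 0\<^sub>v n"
  shows "invertible_mat A"
proof -
  have "det A \<noteq> 0" using det_0_iff_vec_prod_zero[OF A] inj by blast
  from det_non_zero_imp_unit[OF A this, of "()"]
  obtain B where B: "B \<in> carrier_mat n n" "B * A = 1\<^sub>m n" "A * B = 1\<^sub>m n"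
    unfolding Units_def ring_mat_def by auto
  show ?thesis unfolding invertible_mat_def inverts_mat_def using A B by auto
qed

lemma solve_lin:
  fixes M B :: "real mat" and Y :: "real vec"
  assumes M: "M \<in> carrier_mat n n" and Y: "Y \<in> carrier_vec n"
    and i1: "inverts_mat (1\<^sub>m n - M) B" and i2: "inverts_mat B (1\<^sub>m n - M)"
  shows "{x \<in> carrier_vec n. x = M *\<^sub>v x + Y} = {B *\<^sub>v Y}"
proof -
  have IM: "1\<^sub>m n - M \<in> carrier_mat n n" using M by auto
  have e1: "(1\<^sub>m n - M) * B = 1\<^sub>m n" using i1 M unfolding inverts_mat_def by auto
  have e2: "B * (1\<^sub>m n - M) = 1\<^sub>m (dim_row B)" using i2 unfolding inverts_mat_def by auto
  have cB: "dim_col B = n" using arg_cong[OF e1, of dim_col] by simp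
  have rB: "dim_row B = n" using arg_cong[OF e2, of dim_col] M by simp
  have Bc: "B \<in> carrier_mat n n" using cB rB by auto
  have e2': "B * (1\<^sub>m n - M) = 1\<^sub>m n" using e2 rB by simp
  have key: "x = M *\<^sub>v x + Y \<longleftrightarrow> (1\<^sub>m n - M) *\<^sub>v x = Y" if x: "x \<in> carrier_vec n" for x
  proof -
    have "(1\<^sub>m n - M) *\<^sub>v x = x - M *\<^sub>v x"
      using minus_mult_distrib_mat_vec[OF one_carrier_mat M x] x by simp
    moreover have "x = M *\<^sub>v x + Y \<longleftrightarrow> x - M *\<^sub>v x = Y"
      using x M Y by (auto simp: vec_eq_iff)
    ultimately show ?thesis by simp
  qed
  show ?thesis
  proof (intro equalityI subsetI)
    fix x assume "x \<in> {x \<in> carrier_vec n. x = M *\<^sub>v x + Y}"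
    then have x: "x \<in> carrier_vec n" and "(1\<^sub>m n - M) *\<^sub>v x = Y" using key by auto
    then have "B *\<^sub>v Y = (B * (1\<^sub>m n - M)) *\<^sub>v x" using Bc IM by (simp add: assoc_mult_mat_vec)
    then show "x \<in> {B *\<^sub>v Y}" using e2' x by simp
  next
    fix x assume "x \<in> {B *\<^sub>v Y}"
    then have x: "x = B *\<^sub>v Y" by simp
    have xc: "x \<in> carrier_vec n" using x Bc by (simp add: carrier_vecI)
    have "(1\<^sub>m n - M) *\<^sub>v x = ((1\<^sub>m n - M) * B) *\<^sub>v Y" using x Bc IM Y by (simp add: assoc_mult_mat_vec)
    then have "(1\<^sub>m n - M) *\<^sub>v x = Y" using e1 Y by simp
    then show "x \<in> {x \<in> carrier_vec n. x = M *\<^sub>v x + Y}" using key xc by auto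
  qed
qed


theorem theorem4:
  fixes R :: "('n::finite, 't::finite) rule set" and s :: 'n
    and \<theta> :: "('n, 't) rule \<Rightarrow> real" and lp :: "'t list"
    and Xinf :: "('n, 't) atom \<Rightarrow> real"
    and S :: "('n, 't) atom set" and K :: nat and e :: "nat \<Rightarrow> ('n, 't) atom"
  assumes "consistent_pcfg R s \<theta>"
    and "is_prefix R s lp"
    and "least_nonneg_solution R s lp \<theta> Xinf"
    and "is_scc R s lp S"
    and "bij_betw e {..<K} S"
  shows "invertible_mat (1\<^sub>m K - scc_mat R s lp \<theta> Xinf K e)
    \<and> (\<forall>B. inverts_mat (1\<^sub>m K - scc_mat R s lp \<theta> Xinf K e) B
            \<and> inverts_mat B (1\<^sub>m K - scc_mat R s lp \<theta> Xinf K e) \<longrightarrow>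
          {x \<in> carrier_vec K. x = scc_mat R s lp \<theta> Xinf K e *\<^sub>v x + scc_vec R s lp \<theta> Xinf S K e}
            = {B *\<^sub>v scc_vec R s lp \<theta> Xinf S K e}
          \<and> vec K (\<lambda>j. Xinf (e j)) = B *\<^sub>v scc_vec R s lp \<theta> Xinf S K e)"
proof -
  interpret scc_ctx R s \<theta> lp Xinf S K e
    using assms(1,3,4,5) by unfold_locales
  let ?M = "scc_mat R s lp \<theta> Xinf K e"
  let ?Y = "scc_vec R s lp \<theta> Xinf S K e"
  have inv: "invertible_mat (1\<^sub>m K - ?M)"
  proof (rule inj_imp_invertible)
    show "1\<^sub>m K - ?M \<in> carrier_mat K K" by (rule minus_carrier_mat[OF mat_carrier])
    fix x assume x: "x \<in> carrier_vec K" and z: "(1\<^sub>m K - ?M) *\<^sub>v x = 0\<^sub>v K"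
    have "(1\<^sub>m K - ?M) *\<^sub>v x = x - ?M *\<^sub>v x"
      using minus_mult_distrib_mat_vec[OF one_carrier_mat mat_carrier x] x by simp
    then have "x = ?M *\<^sub>v x" using z x mat_carrier by (auto simp: vec_eq_iff)
    then show "x = 0\<^sub>v K" using kernel_trivial x by blast
  qed
  have rest: "{x \<in> carrier_vec K. x = ?M *\<^sub>v x + ?Y} = {B *\<^sub>v ?Y} \<and> vec K (\<lambda>j. Xinf (e j)) = B *\<^sub>v ?Y"
    if B: "inverts_mat (1\<^sub>m K - ?M) B" "inverts_mat B (1\<^sub>m K - ?M)" for B
  proof -
    have eq: "{x \<in> carrier_vec K. x = ?M *\<^sub>v x + ?Y} = {B *\<^sub>v ?Y}"
      by (rule solve_lin[OF mat_carrier vec_carrier B])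
    have "vec K (\<lambda>j. Xinf (e j)) \<in> {x \<in> carrier_vec K. x = ?M *\<^sub>v x + ?Y}"
      using Xinf_fix by simp
    then show ?thesis using eq by simp
  qed
  show ?thesis using inv rest by blast
qed

end
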